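(* Consider the algorithm described in the context, applied to $\psi=f+\varphi$ where $\nabla f$ is locally Lipschitz continuous, and assume the generated iterates $\{x^k\}$ are bounded. Then the following accuracy condition (B.3) holds: for every subsequence $\{k_\ell\}$ such that $\{x^{k_\ell}\}$ converges and $\alpha_{k_\ell}\to0$, $$\psi(x^{k_\ell}+\alpha_{k_\ell}\bar s^{k_\ell})-\psi(x^{k_\ell})-\alpha_{k_\ell}\psi'(x^{k_\ell};\bar s^{k_\ell})=o(\alpha_{k_\ell})\quad(\ell\to\infty),$$ in each of the following cases: (i) $\varphi$ is polyhedral (a pointwise maximum of finitely many affine functions) and the safeguard satisfies $\Gamma(x,d)\le\Gamma_{\max}(x,d)$; (ii) (group lasso) the variable is $X=(X_1,\dots,X_{n_2})\in\mathbb{R}^{n_1\times n_2}$, $\varphi(X)=\sum_{i=1}^{n_2}\|X_i\|$, and for $D=(D_1,\dots,D_{n_2})$ with $\|D\|=1$ (Frobenius norm) the safeguard is $$\Gamma(X,D)=\min\Big\{\Gamma_{\max}(X,D),\ \min_{X_i\ne0}\frac{\|X_i\|^{1+\sigma}}{1-\theta_i^2},\ \min_{X_i\ne0}\frac{\|X_i\|}{\max\{-2\theta_i,0\}}\Big\}$$ for a fixed $\sigma>0$, where $\theta_i=\langle X_i,D_i\rangle/(\|X_i\|\,\|D_i\|)$ and $c/0:=+\infty$ for $c>0$.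
   Context: Problem: minimize $\psi=f+\varphi$ where $f$ is continuously differentiable and $\varphi$ is real-valued convex. Notation: $\|\cdot\|$ Euclidean (Frobenius for matrices) norm, $B_r(x)$ open ball, $\bar v=v/\|v\|$, $\psi'(x;d)$ directional derivative, $\partial\psi(x)=\nabla f(x)+\partial\varphi(x)$; $x$ is stationary if $0\in\partial\psi(x)$. Pseudo-gradient: $g(x)=u(x)d(x)$ where, for non-stationary $x$, $\|d(x)\|=1$, $\psi'(x;d(x))<0$, $u(x)\in[\psi'(x;d(x)),0)$, and for stationary $x$, $d(x)=0$, $u(x)=0$. Safeguards: for $\|d\|=1$, $\Gamma_{\max}(x,d)=\sup\{T>0: t\mapsto\psi(x+td)\text{ is } C^1\text{ on }(0,T)\}$, $\Gamma(x)=\inf_{\|d\|=1}\Gamma_{\max}(x,d)$; a stepsize safeguard $(x,d)\mapsto\Gamma(x,d)\in(0,\infty]$ is fixed. Truncation: $\psi$ can be truncated with data $\mathbb{R}^n=S_0\supset\cdots\supset S_m$, $\delta\in(0,\infty]$, $\kappa>0$, $T:\mathbb{R}^n\times(0,\delta]\to\mathbb{R}^n$ meaning (i) $\Gamma(x)\ge\delta$ on $S_m$; (ii) for $a\in(0,\delta]$, $x\in S_i\setminus S_{i+1}$, $i<m$: if $\Gamma(x)\ge a$ then $T(x,a)=x$, else $T(x,a)\in S_{i+1}$, $\Gamma(T(x,a))\ge a$, $\|T(x,a)-x\|\le\kappa a$. Put $S_{m+1}=\emptyset$. Algorithm: parameters $0<\eta<\eta_1<\eta_2<1$, $0<r_1<1<r_2$,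 $\Delta_{\max}>0$, $\gamma_1,\gamma_2>0$, a positive strictly decreasing summable sequence $(\epsilon_s)$ with $\epsilon_s\le\delta$, a nonincreasing $\ell:(0,\infty)\to[0,\frac12]$ with $\ell(\Delta)\to0$ as $\Delta\to0^+$; start $x^0$, $\Delta_0>0$, counters $c_0=\dots=c_m=0$. Iteration $k$: $g^k=g(x^k)$; stop if $g^k=0$. Choose $B^k\in\mathbb{R}^{n\times n}$, model $m_k(s)=\psi(x^k)+\langle g^k,s\rangle+\frac12\langle s,B^ks\rangle$, Cauchy point $s^k_C=-\alpha^C_kg^k$ with $\alpha^C_k\in\arg\min_{0\le t\le\Delta_k/\|g^k\|}m_k(-tg^k)$. Choose $s^k$, $\|s^k\|\le\Delta_k$, with $m_k(0)-m_k(s^k)\ge\frac{\gamma_1}{2}\|g^k\|\min\{\Delta_k,\gamma_2\|g^k\|\}$ and $m_k(0)-m_k(s^k)\ge(1-\ell(\|s^k\|))(m_k(0)-m_k(s^k_C))$. Let $\rho^1_k=\frac{\psi(x^k)-\psi(x^k+s^k)}{m_k(0)-m_k(s^k)}$. If $\rho^1_k\ge\eta_1$: $\tilde x^k=x^k+s^k$, $\Delta_{k+1}=\min\{\Delta_{\max},r_2\Delta_k\}$ if $\rho^1_k>\eta_2$ and $\Delta_{k+1}=\Delta_k$ otherwise. Stepsize computation (performed for the analysis in every iteration, used by the algorithm when $\rho^1_k<\eta_1$): $\alpha_k=\min\{\Gamma(x^k,\bar s^k),\|s^k\|\}$; if $m_k(0)-m_k(\alpha_k\bar s^k)<\frac{\alpha_k}{2\|s^k\|}(m_k(0)-m_k(s^k))$,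 replace $s^k$ by $s^k_C$ (so $\bar s^k=\bar s^k_C$) and $\alpha_k=\min\{\Gamma(x^k,\bar s^k_C),\|s^k_C\|\}$; $\rho^2_k=\frac{\psi(x^k)-\psi(x^k+\alpha_k\bar s^k)}{m_k(0)-m_k(\alpha_k\bar s^k)}$. If $\rho^1_k<\eta_1$: $\Delta_{k+1}=r_1\Delta_k$ if $\rho^2_k<\eta_1$, $=\min\{\Delta_{\max},r_2\Delta_k\}$ if $\rho^2_k>\eta_2$, $=\Delta_k$ otherwise; $\tilde x^k=x^k+\alpha_k\bar s^k$ if $\rho^2_k\ge\eta$ and $\tilde x^k=x^k$ otherwise. Truncation step: set $\tilde x=\tilde x^k$ and repeat {find $i$ with $\tilde x\in S_i\setminus S_{i+1}$; if $\Gamma(\tilde x)<\epsilon_{c_i}$ set $\tilde x\leftarrow T(\tilde x,\epsilon_{c_i})$, $c_i\leftarrow c_i+1$; else stop}; $x^{k+1}=\tilde x$. Here $\alpha_k,\bar s^k$ denote the quantities of the stepsize computation. *)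

theory Defs
  imports "HOL-Analysis.Analysis" "HOL-Library.Landau_Symbols"
begin

definition dirderiv :: "('a::real_normed_vector \<Rightarrow> real) \<Rightarrow> 'a \<Rightarrow> 'a \<Rightarrow> real" where
  "dirderiv psi x d = Lim (at_right 0) (\<lambda>t::real. (psi (x + t *\<^sub>R d) - psi x) / t)"

definition subdiff :: "('a::real_inner \<Rightarrow> real) \<Rightarrow> 'a \<Rightarrow> 'a set" where
  "subdiff phi x = {v. \<forall>y. phi y \<ge> phi x + inner v (y - x)}"

definition stationary :: "('a::real_inner \<Rightarrow> 'a) \<Rightarrow> ('a \<Rightarrow> real) \<Rightarrow> 'a \<Rightarrow> bool" where
  "stationary G phi x \<longleftrightarrow> 0 \<in> {G x + v | v. v \<in> subdiff phi x}"

definition C1_grad :: "('a::real_inner \<Rightarrow> real) \<Rightarrow> ('a \<Rightarrow> 'a) \<Rightarrow> bool" where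
  "C1_grad f G \<longleftrightarrow> (\<forall>x. (f has_derivative (\<lambda>h. inner (G x) h)) (at x)) \<and> continuous_on UNIV G"

definition locally_lipschitz :: "('a::metric_space \<Rightarrow> 'b::metric_space) \<Rightarrow> bool" where
  "locally_lipschitz G \<longleftrightarrow>
     (\<forall>x. \<exists>r>0. \<exists>L. \<forall>y\<in>ball x r. \<forall>z\<in>ball x r. dist (G y) (G z) \<le> L * dist y z)"

text \<open>Pseudo-gradient g(x) = u(x) d(x).\<close>
definition pseudo_gradient ::
  "('a::real_inner \<Rightarrow> real) \<Rightarrow> ('a \<Rightarrow> 'a) \<Rightarrow> ('a \<Rightarrow> real) \<Rightarrow> ('a \<Rightarrow> real) \<Rightarrow> ('a \<Rightarrow> 'a) \<Rightarrow> bool" where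
  "pseudo_gradient psi G phi u d \<longleftrightarrow>
     (\<forall>x. \<not> stationary G phi x \<longrightarrow>
          norm (d x) = 1 \<and> dirderiv psi x (d x) < 0 \<and>
          dirderiv psi x (d x) \<le> u x \<and> u x < 0) \<and>
     (\<forall>x. stationary G phi x \<longrightarrow> d x = 0 \<and> u x = 0)"

definition C1_on_interval :: "(real \<Rightarrow> real) \<Rightarrow> real \<Rightarrow> bool" where
  "C1_on_interval h T \<longleftrightarrow>
     (\<exists>h'. (\<forall>t\<in>{0<..<T}. (h has_real_derivative h' t) (at t)) \<and> continuous_on {0<..<T} h')"

definition Gmax :: "('a::real_normed_vector \<Rightarrow> real) \<Rightarrow> 'a \<Rightarrow> 'a \<Rightarrow> ereal" where
  "Gmax psi x d = Sup (ereal ` {T. T > 0 \<and> C1_on_interval (\<lambda>t. psi (x + t *\<^sub>R d)) T})"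

definition Gpt :: "('a::real_normed_vector \<Rightarrow> real) \<Rightarrow> 'a \<Rightarrow> ereal" where
  "Gpt psi x = (INF d\<in>{d. norm d = 1}. Gmax psi x d)"

text \<open>x lies in S_i minus S_(i+1), with the convention S_(m+1) = empty.\<close>
definition in_level :: "(nat \<Rightarrow> 'a set) \<Rightarrow> nat \<Rightarrow> nat \<Rightarrow> 'a \<Rightarrow> bool" where
  "in_level S m i x \<longleftrightarrow> i \<le> m \<and> x \<in> S i \<and> (i < m \<longrightarrow> x \<notin> S (Suc i))"

definition truncation_data ::
  "('a::real_normed_vector \<Rightarrow> real) \<Rightarrow> (nat \<Rightarrow> 'a set) \<Rightarrow> nat \<Rightarrow> ereal \<Rightarrow> real
   \<Rightarrow> ('a \<Rightarrow> real \<Rightarrow> 'a) \<Rightarrow> bool" where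
  "truncation_data psi S m \<delta> \<kappa> T \<longleftrightarrow>
     S 0 = UNIV \<and> (\<forall>i<m. S (Suc i) \<subseteq> S i) \<and> 0 < \<delta> \<and> \<kappa> > 0 \<and>
     (\<forall>x\<in>S m. Gpt psi x \<ge> \<delta>) \<and>
     (\<forall>a. 0 < a \<and> ereal a \<le> \<delta> \<longrightarrow>
        (\<forall>i<m. \<forall>x. x \<in> S i \<and> x \<notin> S (Suc i) \<longrightarrow>
           (if Gpt psi x \<ge> ereal a then T x a = x
            else T x a \<in> S (Suc i) \<and> Gpt psi (T x a) \<ge> ereal a \<and> norm (T x a - x) \<le> \<kappa> * a)))"

inductive trunc_loop ::
  "('a::real_normed_vector \<Rightarrow> real) \<Rightarrow> (nat \<Rightarrow> 'a set) \<Rightarrow> nat \<Rightarrow> ('a \<Rightarrow> real \<Rightarrow> 'a)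
   \<Rightarrow> (nat \<Rightarrow> real) \<Rightarrow> 'a \<times> (nat \<Rightarrow> nat) \<Rightarrow> 'a \<times> (nat \<Rightarrow> nat) \<Rightarrow> bool"
  for psi S m T eps where
  stop: "in_level S m i x \<Longrightarrow> \<not> (Gpt psi x < ereal (eps (c i)))
         \<Longrightarrow> trunc_loop psi S m T eps (x, c) (x, c)"
| step: "in_level S m i x \<Longrightarrow> Gpt psi x < ereal (eps (c i))
         \<Longrightarrow> trunc_loop psi S m T eps (T x (eps (c i)), c(i := Suc (c i))) r
         \<Longrightarrow> trunc_loop psi S m T eps (x, c) r"

definition emin :: "ereal \<Rightarrow> real \<Rightarrow> real" where
  "emin G r = real_of_ereal (min G (ereal r))"

definition unitv :: "'a::real_normed_vector \<Rightarrow> 'a" where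
  "unitv v = v /\<^sub>R norm v"

definition model :: "real \<Rightarrow> 'a::real_inner \<Rightarrow> ('a \<Rightarrow> 'a) \<Rightarrow> 'a \<Rightarrow> real" where
  "model p0 g B s = p0 + inner g s + 1/2 * inner s (B s)"

definition alg_params ::
  "real \<Rightarrow> real \<Rightarrow> real \<Rightarrow> real \<Rightarrow> real \<Rightarrow> real \<Rightarrow> real \<Rightarrow> real
   \<Rightarrow> (nat \<Rightarrow> real) \<Rightarrow> (real \<Rightarrow> real) \<Rightarrow> ereal \<Rightarrow> bool" where
  "alg_params \<eta> \<eta>1 \<eta>2 r1 r2 \<Delta>max \<gamma>1 \<gamma>2 eps ell \<delta> \<longleftrightarrow>
     0 < \<eta> \<and> \<eta> < \<eta>1 \<and> \<eta>1 < \<eta>2 \<and> \<eta>2 < 1 \<and> 0 < r1 \<and> r1 < 1 \<and> 1 < r2 \<and>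
     \<Delta>max > 0 \<and> \<gamma>1 > 0 \<and> \<gamma>2 > 0 \<and>
     (\<forall>s. eps s > 0) \<and> (\<forall>s. eps (Suc s) < eps s) \<and> summable eps \<and>
     (\<forall>s. ereal (eps s) \<le> \<delta>) \<and>
     (\<forall>a b. 0 < a \<and> a \<le> b \<longrightarrow> ell b \<le> ell a) \<and>
     (\<forall>a>0. 0 \<le> ell a \<and> ell a \<le> 1/2) \<and> (ell \<longlongrightarrow> 0) (at_right 0)"

text \<open>A run of the algorithm that never stops (g(x^k) \<noteq> 0 for all k).
  x: iterates, Dl: radii, B: model operators, s: trial steps chosen in Step 2,
  aC: Cauchy stepsizes, c: counter vectors at the beginning of iteration k,
  al, sb: alpha_k and bar s^k from the stepsize computation.\<close>
definition TR_run ::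
  "('a::euclidean_space \<Rightarrow> real) \<Rightarrow> ('a \<Rightarrow> 'a) \<Rightarrow> ('a \<Rightarrow> real)
   \<Rightarrow> ('a \<Rightarrow> real) \<Rightarrow> ('a \<Rightarrow> 'a) \<Rightarrow> ('a \<Rightarrow> 'a \<Rightarrow> ereal)
   \<Rightarrow> (nat \<Rightarrow> 'a set) \<Rightarrow> nat \<Rightarrow> ereal \<Rightarrow> real \<Rightarrow> ('a \<Rightarrow> real \<Rightarrow> 'a)
   \<Rightarrow> real \<Rightarrow> real \<Rightarrow> real \<Rightarrow> real \<Rightarrow> real \<Rightarrow> real \<Rightarrow> real \<Rightarrow> real
   \<Rightarrow> (nat \<Rightarrow> real) \<Rightarrow> (real \<Rightarrow> real)
   \<Rightarrow> (nat \<Rightarrow> 'a) \<Rightarrow> (nat \<Rightarrow> real) \<Rightarrow> (nat \<Rightarrow> 'a \<Rightarrow> 'a) \<Rightarrow> (nat \<Rightarrow> 'a) \<Rightarrow> (nat \<Rightarrow> real)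
   \<Rightarrow> (nat \<Rightarrow> nat \<Rightarrow> nat) \<Rightarrow> (nat \<Rightarrow> real) \<Rightarrow> (nat \<Rightarrow> 'a) \<Rightarrow> bool" where
  "TR_run f G phi u d Gam S m \<delta> \<kappa> T \<eta> \<eta>1 \<eta>2 r1 r2 \<Delta>max \<gamma>1 \<gamma>2 eps ell
          x Dl B s aC c al sb \<longleftrightarrow>
   (let psi = (\<lambda>y. f y + phi y) in
     C1_grad f G \<and> convex_on UNIV phi \<and>
     pseudo_gradient psi G phi u d \<and>
     (\<forall>y e. norm e = 1 \<longrightarrow> Gam y e > 0) \<and>
     truncation_data psi S m \<delta> \<kappa> T \<and>
     alg_params \<eta> \<eta>1 \<eta>2 r1 r2 \<Delta>max \<gamma>1 \<gamma>2 eps ell \<delta> \<and>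
     Dl 0 > 0 \<and> c 0 = (\<lambda>i. 0) \<and>
     (\<forall>k. let g = u (x k) *\<^sub>R d (x k);
              mk = model (psi (x k)) g (B k);
              sC = - (aC k) *\<^sub>R g;
              pred = mk 0 - mk (s k);
              rho1 = (psi (x k) - psi (x k + s k)) / pred;
              a1 = emin (Gam (x k) (unitv (s k))) (norm (s k));
              rho2 = (psi (x k) - psi (x k + al k *\<^sub>R sb k)) / (mk 0 - mk (al k *\<^sub>R sb k));
              Dnext = Dl (Suc k);
              xt = (if rho1 \<ge> \<eta>1 then x k + s k
                    else if rho2 \<ge> \<eta> then x k + al k *\<^sub>R sb k else x k)
          in g \<noteq> 0 \<and>
             linear (B k) \<and>
             0 \<le> aC k \<and> aC k \<le> Dl k / norm g \<and>
             (\<forall>t. 0 \<le> t \<and> t \<le> Dl k / norm g \<longrightarrow> mk sC \<le> mk (- t *\<^sub>R g)) \<and>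
             norm (s k) \<le> Dl k \<and>
             pred \<ge> \<gamma>1 / 2 * norm g * min (Dl k) (\<gamma>2 * norm g) \<and>
             pred \<ge> (1 - ell (norm (s k))) * (mk 0 - mk sC) \<and>
             (if mk 0 - mk (a1 *\<^sub>R unitv (s k)) < a1 / (2 * norm (s k)) * pred
              then sb k = unitv sC \<and> al k = emin (Gam (x k) (unitv sC)) (norm sC)
              else sb k = unitv (s k) \<and> al k = a1) \<and>
             (if rho1 \<ge> \<eta>1 then
                Dnext = (if rho1 > \<eta>2 then min \<Delta>max (r2 * Dl k) else Dl k)
              else
                Dnext = (if rho2 < \<eta>1 then r1 * Dl k
                         else if rho2 > \<eta>2 then min \<Delta>max (r2 * Dl k) else Dl k)) \<and>
             trunc_loop psi S m T eps (xt, c k) (x (Suc k), c (Suc k))))"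

definition accuracy_B3 ::
  "('a::real_normed_vector \<Rightarrow> real) \<Rightarrow> (nat \<Rightarrow> 'a) \<Rightarrow> (nat \<Rightarrow> real) \<Rightarrow> (nat \<Rightarrow> 'a) \<Rightarrow> bool" where
  "accuracy_B3 psi x al sb \<longleftrightarrow>
     (\<forall>r::nat \<Rightarrow> nat. strict_mono r \<and> convergent (\<lambda>l. x (r l)) \<and> (\<lambda>l. al (r l)) \<longlonglongrightarrow> 0 \<longrightarrow>
        (\<lambda>l. psi (x (r l) + al (r l) *\<^sub>R sb (r l)) - psi (x (r l))
              - al (r l) * dirderiv psi (x (r l)) (sb (r l))) \<in> o(\<lambda>l. al (r l)))"

definition polyhedral :: "('a::real_inner \<Rightarrow> real) \<Rightarrow> bool" where
  "polyhedral phi \<longleftrightarrow> (\<exists>A::('a \<times> real) set. finite A \<and> A \<noteq> {} \<and>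
      (\<forall>y. phi y = Max ((\<lambda>(a, b). inner a y + b) ` A)))"

text \<open>Group lasso regularizer: X :: real^'n1^'n2, X $ i is the i-th column X_i.\<close>
definition group_lasso :: "real^'n1^'n2 \<Rightarrow> real" where
  "group_lasso X = (\<Sum>i\<in>UNIV. norm (X $ i))"

text \<open>c/0 := +infinity (used only with c > 0).\<close>
definition ediv :: "real \<Rightarrow> real \<Rightarrow> ereal" where
  "ediv a b = (if b = 0 then \<infinity> else ereal (a / b))"

definition theta :: "real^'n1^'n2 \<Rightarrow> real^'n1^'n2 \<Rightarrow> 'n2 \<Rightarrow> real" where
  "theta X D i = inner (X $ i) (D $ i) / (norm (X $ i) * norm (D $ i))"

definition group_lasso_safeguard ::
  "(real^'n1^'n2 \<Rightarrow> real) \<Rightarrow> real \<Rightarrow> real^'n1^'n2 \<Rightarrow> real^'n1^'n2 \<Rightarrow> ereal" where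
  "group_lasso_safeguard psi \<sigma> X D =
     min (Gmax psi X D)
       (min (INF i\<in>{i. X $ i \<noteq> 0}. ediv (norm (X $ i) powr (1 + \<sigma>)) (1 - (theta X D i)\<^sup>2))
            (INF i\<in>{i. X $ i \<noteq> 0}. ediv (norm (X $ i)) (max (- 2 * theta X D i) 0)))"

end

theory Submission
  imports Defs
begin


lemma line_deriv:
  assumes "C1_grad f G"
  shows "((\<lambda>t. f (y + t *\<^sub>R e)) has_real_derivative inner (G (y + t *\<^sub>R e)) e) (at t within S)"
proof -
  have d1: "((\<lambda>t. y + t *\<^sub>R e) has_derivative (\<lambda>h. h *\<^sub>R e)) (at t within S)"
    by (auto intro!: derivative_eq_intros)
  have d2: "(f has_derivative (\<lambda>h. inner (G (y + t *\<^sub>R e)) h)) (at (y + t *\<^sub>R e))"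
    using assms unfolding C1_grad_def by blast
  have "((\<lambda>t. f (y + t *\<^sub>R e)) has_derivative (\<lambda>h. inner (G (y + t *\<^sub>R e)) (h *\<^sub>R e))) (at t within S)"
    using has_derivative_compose[OF d1 d2] by (simp add: o_def)
  moreover have "(\<lambda>h. inner (G (y + t *\<^sub>R e)) (h *\<^sub>R e)) = (*) (inner (G (y + t *\<^sub>R e)) e)"
    by (auto simp: mult.commute)
  ultimately show ?thesis by (simp add: has_field_derivative_def)
qed

lemma Lim_right:
  "((g::real\<Rightarrow>real) \<longlongrightarrow> l) (at_right 0) \<Longrightarrow> Lim (at_right 0) g = l"
  by (rule tendsto_Lim) (simp_all add: trivial_limit_at_right_real)

lemma f_quot:
  assumes "C1_grad f G"
  shows "((\<lambda>t. (f (y + t *\<^sub>R e) - f y) / t) \<longlongrightarrow> inner (G y) e) (at_right 0)"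
proof -
  have "((\<lambda>t. f (y + t *\<^sub>R e)) has_real_derivative inner (G (y + 0 *\<^sub>R e)) e) (at 0)"
    by (rule line_deriv[OF assms])
  then have "((\<lambda>t. (f (y + t *\<^sub>R e) - f y) / t) \<longlongrightarrow> inner (G y) e) (at 0)"
    unfolding has_field_derivative_iff by simp
  then show ?thesis by (rule tendsto_mono[OF at_le, rotated]) simp
qed

lemma f_lip_bound:
  assumes C1: "C1_grad f G"
    and lip: "\<forall>u\<in>ball y0 \<rho>. \<forall>v\<in>ball y0 \<rho>. dist (G u) (G v) \<le> L * dist u v"
    and y: "dist y0 y < \<rho>/2" and a: "0 < a" "a < \<rho>/2" and e: "norm e = 1"
  shows "\<bar>f (y + a *\<^sub>R e) - f y - a * inner (G y) e\<bar> \<le> \<bar>L\<bar> * a^2"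
proof -
  obtain z where z: "0 < z" "z < a"
    and eq: "f (y + a *\<^sub>R e) - f (y + 0 *\<^sub>R e) = (a - 0) * inner (G (y + z *\<^sub>R e)) e"
    using MVT2[OF a(1), of "\<lambda>t. f (y + t *\<^sub>R e)" "\<lambda>t. inner (G (y + t *\<^sub>R e)) e"]
      line_deriv[OF C1] by blast
  have "\<bar>f (y + a *\<^sub>R e) - f y - a * inner (G y) e\<bar> = a * \<bar>inner (G (y + z *\<^sub>R e) - G y) e\<bar>"
    using eq a by (simp add: inner_diff_left) (metis abs_mult abs_of_pos right_diff_distrib)
  also have "\<bar>inner (G (y + z *\<^sub>R e) - G y) e\<bar> \<le> norm (G (y + z *\<^sub>R e) - G y)"
    using Cauchy_Schwarz_ineq2[of "G (y + z *\<^sub>R e) - G y" e] e by simp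
  also have "\<dots> \<le> L * dist (y + z *\<^sub>R e) y"
  proof -
    have "y \<in> ball y0 \<rho>" using y zero_le_dist[of y0 y] by (simp del: zero_le_dist)
    moreover have "y + z *\<^sub>R e \<in> ball y0 \<rho>"
    proof -
      have "dist y0 (y + z *\<^sub>R e) \<le> dist y0 y + dist y (y + z *\<^sub>R e)" by (rule dist_triangle)
      also have "dist y (y + z *\<^sub>R e) = z" using e z by (simp add: dist_norm)
      finally show ?thesis using y z a by simp
    qed
    ultimately show ?thesis using lip by (metis dist_norm dist_commute)
  qed
  also have "\<dots> = L * z" using e z by (simp add: dist_norm)
  finally have "\<bar>f (y + a *\<^sub>R e) - f y - a * inner (G y) e\<bar> \<le> a * (L * z)"
    using a by (simp add: mult_left_mono)
  also have "\<dots> \<le> a * (\<bar>L\<bar> * a)"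
    using z a by (intro mult_left_mono) (auto intro: mult_mono abs_ge_self order_trans[OF mult_right_mono[of L "\<bar>L\<bar>"]])
  finally show ?thesis by (simp add: power2_eq_square algebra_simps)
qed


lemma dirderiv_zero: "dirderiv psi y 0 = 0"
  unfolding dirderiv_def by (simp add: Lim_right)

lemma generic:
  fixes f phi :: "'a::euclidean_space \<Rightarrow> real"
  assumes C1: "C1_grad f G" and LL: "locally_lipschitz G"
    and y: "y \<longlonglongrightarrow> y0" and al: "\<alpha> \<longlonglongrightarrow> 0"
    and e: "\<forall>l. e l = 0 \<or> (norm (e l) = 1 \<and> 0 < \<alpha> l)"
    and q: "\<forall>l. e l \<noteq> 0 \<longrightarrow> ((\<lambda>t. (phi (y l + t *\<^sub>R e l) - phi (y l)) / t) \<longlongrightarrow> q l) (at_right 0)"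
    and Ephi: "(\<lambda>l. if e l = 0 then 0 else phi (y l + \<alpha> l *\<^sub>R e l) - phi (y l) - \<alpha> l * q l) \<in> o(\<alpha>)"
  shows "(\<lambda>l. (f (y l + \<alpha> l *\<^sub>R e l) + phi (y l + \<alpha> l *\<^sub>R e l)) - (f (y l) + phi (y l))
            - \<alpha> l * dirderiv (\<lambda>z. f z + phi z) (y l) (e l)) \<in> o(\<alpha>)"
proof -
  define Ef where "Ef l = (if e l = 0 then 0 else f (y l + \<alpha> l *\<^sub>R e l) - f (y l) - \<alpha> l * inner (G (y l)) (e l))" for l
  have Ef: "Ef \<in> o(\<alpha>)"
  proof (rule landau_o.smallI)
    fix c :: real assume c: "c > 0"
    obtain \<rho> where \<rho>: "\<rho> > 0" and "\<exists>L. \<forall>u\<in>ball y0 \<rho>. \<forall>v\<in>ball y0 \<rho>. dist (G u) (G v) \<le> L * dist u v"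
      using LL unfolding locally_lipschitz_def by blast
    then obtain L where lip: "\<forall>u\<in>ball y0 \<rho>. \<forall>v\<in>ball y0 \<rho>. dist (G u) (G v) \<le> L * dist u v" by blast
    have ev1: "eventually (\<lambda>l. dist (y l) y0 < \<rho>/2) sequentially"
      by (rule tendstoD[OF y]) (use \<rho> in simp)
    have ev2: "eventually (\<lambda>l. dist (\<alpha> l) 0 < min (\<rho>/2) (c / (\<bar>L\<bar> + 1))) sequentially"
      by (rule tendstoD[OF al]) (use \<rho> c in simp)
    show "eventually (\<lambda>l. norm (Ef l) \<le> c * norm (\<alpha> l)) sequentially"
      using ev1 ev2
    proof eventually_elim
      case (elim l)
      show ?case
      proof (cases "e l = 0")
        case True then show ?thesis using c by (simp add: Ef_def)
      next
        case False
        then have e1: "norm (e l) = 1" and a0: "0 < \<alpha> l" using e by auto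
        have "\<bar>Ef l\<bar> \<le> \<bar>L\<bar> * (\<alpha> l)^2"
          unfolding Ef_def using False f_lip_bound[OF C1 lip, of "y l" "\<alpha> l" "e l"] elim e1 a0
          by (simp add: dist_commute)
        also have "\<dots> = (\<bar>L\<bar> * \<alpha> l) * \<alpha> l" by (simp add: power2_eq_square)
        also have "\<dots> \<le> c * \<alpha> l"
        proof (rule mult_right_mono)
          have "\<alpha> l < c / (\<bar>L\<bar> + 1)" using elim a0 by simp
          then have "\<alpha> l * (\<bar>L\<bar> + 1) < c" by (simp add: field_simps)
          then show "\<bar>L\<bar> * \<alpha> l \<le> c" using a0 by (simp add: algebra_simps)
        qed (use a0 in simp)
        finally show ?thesis using a0 by simp
      qed
    qed
  qed
  have dd: "dirderiv (\<lambda>z. f z + phi z) (y l) (e l) = inner (G (y l)) (e l) + q l" if "e l \<noteq> 0" for l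
  proof -
    have "((\<lambda>t. (f (y l + t *\<^sub>R e l) - f (y l)) / t + (phi (y l + t *\<^sub>R e l) - phi (y l)) / t)
           \<longlongrightarrow> inner (G (y l)) (e l) + q l) (at_right 0)"
      using f_quot[OF C1] q that by (intro tendsto_add) auto
    then show ?thesis unfolding dirderiv_def
      by (intro Lim_right) (simp add: add_divide_distrib[symmetric] algebra_simps)
  qed
  have eq: "(\<lambda>l. (f (y l + \<alpha> l *\<^sub>R e l) + phi (y l + \<alpha> l *\<^sub>R e l)) - (f (y l) + phi (y l))
            - \<alpha> l * dirderiv (\<lambda>z. f z + phi z) (y l) (e l))
       = (\<lambda>l. Ef l + (if e l = 0 then 0 else phi (y l + \<alpha> l *\<^sub>R e l) - phi (y l) - \<alpha> l * q l))"
    by (rule ext) (auto simp: Ef_def dd dirderiv_zero algebra_simps)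
  show ?thesis unfolding eq by (rule sum_in_smallo(1)[OF Ef Ephi])
qed



lemma poly_slope:
  fixes phi :: "'a::real_inner \<Rightarrow> real"
  assumes A: "finite A" "A \<noteq> {}" "\<forall>z. phi z = Max ((\<lambda>(a, b). inner a z + b) ` A)"
    and D: "((\<lambda>s. phi (y + s *\<^sub>R e)) has_real_derivative k) (at t)"
  shows "k \<in> (\<lambda>p. inner (fst p) e) ` A"
proof -
  have fin: "finite ((\<lambda>(a, b). inner a (y + t *\<^sub>R e) + b) ` A)" using A by simp
  have "Max ((\<lambda>(a, b). inner a (y + t *\<^sub>R e) + b) ` A) \<in> (\<lambda>(a, b). inner a (y + t *\<^sub>R e) + b) ` A"
    using A by (intro Max_in) auto
  then obtain p where p: "p \<in> A" and pt: "phi (y + t *\<^sub>R e) = inner (fst p) (y + t *\<^sub>R e) + snd p"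
    using A(3) by (auto split: prod.splits)
  have ge: "phi (y + s *\<^sub>R e) \<ge> inner (fst p) (y + s *\<^sub>R e) + snd p" for s
  proof -
    have "inner (fst p) (y + s *\<^sub>R e) + snd p \<in> (\<lambda>(a, b). inner a (y + s *\<^sub>R e) + b) ` A"
      using p by (force split: prod.splits)
    then show ?thesis using A by (simp add: Max_ge)
  qed
  have D2: "((\<lambda>s. phi (y + s *\<^sub>R e) - (inner (fst p) y + s * inner (fst p) e + snd p)) has_real_derivative
       k - inner (fst p) e) (at t)"
    using D by (auto intro!: derivative_eq_intros)
  have "k - inner (fst p) e = 0"
  proof (rule DERIV_local_min[OF D2, of 1])
    show "\<forall>s. \<bar>t - s\<bar> < 1 \<longrightarrow> phi (y + t *\<^sub>R e) - (inner (fst p) y + t * inner (fst p) e + snd p)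
        \<le> phi (y + s *\<^sub>R e) - (inner (fst p) y + s * inner (fst p) e + snd p)"
      using pt ge by (auto simp: inner_add_right)
  qed simp
  then show ?thesis using p by force
qed


lemma line_cont: fixes y e :: "'a::real_normed_vector" shows "continuous_on S (\<lambda>t::real. y + t *\<^sub>R e)"
  by (rule continuous_on_add[OF continuous_on_const continuous_on_scaleR[OF continuous_on_id continuous_on_const]])

lemma C1_G_cont: "C1_grad f G \<Longrightarrow> continuous_on S (\<lambda>t::real. inner (G (y + t *\<^sub>R e)) e)"
  unfolding C1_grad_def
  by (intro continuous_on_inner continuous_on_const continuous_on_compose2[of UNIV G _ "\<lambda>t. y + t *\<^sub>R e"] line_cont) auto

lemma poly_T:
  fixes f phi :: "'a::euclidean_space \<Rightarrow> real"
  assumes C1: "C1_grad f G"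
    and A: "finite A" "A \<noteq> {}" "\<forall>z. phi z = Max ((\<lambda>(a, b). inner a z + b) ` A)"
    and cont: "continuous_on UNIV phi"
    and T: "T > 0" "C1_on_interval (\<lambda>t. f (y + t *\<^sub>R e) + phi (y + t *\<^sub>R e)) T"
  shows "\<exists>c. \<forall>t\<in>{0..<T}. phi (y + t *\<^sub>R e) = phi y + t * c"
proof -
  obtain h' where hd: "\<forall>t\<in>{0<..<T}. ((\<lambda>t. f (y + t *\<^sub>R e) + phi (y + t *\<^sub>R e)) has_real_derivative h' t) (at t)"
    and hc: "continuous_on {0<..<T} h'"
    using T(2) unfolding C1_on_interval_def by blast
  define k where "k t = h' t - inner (G (y + t *\<^sub>R e)) e" for t
  have kd: "((\<lambda>s. phi (y + s *\<^sub>R e)) has_real_derivative k t) (at t)" if "t \<in> {0<..<T}" for t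
  proof -
    have "((\<lambda>s. (f (y + s *\<^sub>R e) + phi (y + s *\<^sub>R e)) - f (y + s *\<^sub>R e)) has_real_derivative k t) (at t)"
      unfolding k_def using hd that by (intro DERIV_diff line_deriv[OF C1]) auto
    then show ?thesis by simp
  qed
  have kc: "continuous_on {0<..<T} k"
    unfolding k_def by (intro continuous_on_diff hc C1_G_cont[OF C1])
  have "k ` {0<..<T} \<subseteq> (\<lambda>p. inner (fst p) e) ` A"
    using poly_slope[OF A kd] by blast
  then have kfin: "finite (k ` {0<..<T})" using A(1) finite_subset by blast
  have "k constant_on {0<..<T}"
    by (rule continuous_finite_range_constant[OF _ kc kfin]) simp
  then obtain c0 where c0: "\<forall>t\<in>{0<..<T}. k t = c0" unfolding constant_on_def by blast
  have hcont: "continuous_on S (\<lambda>s. phi (y + s *\<^sub>R e))" for S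
    by (intro continuous_on_compose2[OF cont line_cont]) auto
  have mid: "phi (y + t *\<^sub>R e) - phi (y + s *\<^sub>R e) = (t - s) * c0" if "0 < s" "s < t" "t < T" for s t
  proof -
    have "((\<lambda>s. phi (y + s *\<^sub>R e)) has_real_derivative k x) (at x)" if "s \<le> x" "x \<le> t" for x
      using kd that \<open>0 < s\<close> \<open>t < T\<close> by auto
    then obtain z where "s < z" "z < t" "phi (y + t *\<^sub>R e) - phi (y + s *\<^sub>R e) = (t - s) * k z"
      using MVT2[OF \<open>s < t\<close>, of "\<lambda>s. phi (y + s *\<^sub>R e)" k] by blast
    then show ?thesis using c0 that by auto
  qed
  have "phi (y + t *\<^sub>R e) = phi y + t * c0" if "t \<in> {0..<T}" for t
  proof (cases "t = 0")
    case True then show ?thesis by simp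
  next
    case False
    then have t: "0 < t" "t < T" using that by auto
    define m where "m s = phi (y + t *\<^sub>R e) - phi (y + s *\<^sub>R e) - (t - s) * c0" for s
    have "m 0 = 0"
    proof (rule continuous_constant_on_closure[of "{0<..<t}" m 0 0])
      show "continuous_on (closure {0<..<t}) m"
        unfolding m_def by (intro continuous_on_diff continuous_on_const hcont continuous_on_mult continuous_on_id)
      show "\<And>s. s \<in> {0<..<t} \<Longrightarrow> m s = 0"
        using mid t by (auto simp: m_def)
      show "0 \<in> closure {0<..<t}" using t by simp
    qed
    then have "phi (y + t *\<^sub>R e) - phi y - t * c0 = 0" by (simp add: m_def)
    then show ?thesis by (simp add: algebra_simps)
  qed
  then show ?thesis by blast
qed



lemma quot_affine:
  assumes "T > 0" "\<forall>t\<in>{0..<T}. phi (y + t *\<^sub>R e) = phi y + t * (c::real)"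
  shows "((\<lambda>t. (phi (y + t *\<^sub>R e) - phi y) / t) \<longlongrightarrow> c) (at_right 0)"
proof -
  have "eventually (\<lambda>t. t \<in> {0<..<T}) (at_right (0::real))"
    by (rule eventually_at_right_real) (use assms in simp)
  then have ev: "eventually (\<lambda>t. c = (phi (y + t *\<^sub>R e) - phi y) / t) (at_right (0::real))"
    by eventually_elim (use assms in auto)
  have "((\<lambda>_. c) \<longlongrightarrow> c) (at_right 0)" by simp
  then show ?thesis using tendsto_cong[OF ev] by blast
qed

lemma poly_line:
  fixes f phi :: "'a::euclidean_space \<Rightarrow> real"
  assumes C1: "C1_grad f G" and P: "polyhedral phi" and cont: "continuous_on UNIV phi"
    and a: "0 < a" "ereal a \<le> Gmax (\<lambda>z. f z + phi z) y e"
  shows "\<exists>c. phi (y + a *\<^sub>R e) - phi y = a * c \<and>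
             ((\<lambda>t. (phi (y + t *\<^sub>R e) - phi y) / t) \<longlongrightarrow> c) (at_right 0)"
proof -
  obtain A where A: "finite A" "A \<noteq> {}" "\<forall>z. phi z = Max ((\<lambda>(a, b). inner a z + b) ` A)"
    using P unfolding polyhedral_def by blast
  define Ts where "Ts = {T. T > 0 \<and> C1_on_interval (\<lambda>t. f (y + t *\<^sub>R e) + phi (y + t *\<^sub>R e)) T}"
  have G: "Gmax (\<lambda>z. f z + phi z) y e = Sup (ereal ` Ts)"
    unfolding Gmax_def Ts_def by simp
  have aff: "\<exists>c. \<forall>t\<in>{0..<T}. phi (y + t *\<^sub>R e) = phi y + t * c" if "T \<in> Ts" for T
    using poly_T[OF C1 A cont] that unfolding Ts_def by blast
  have "ereal 0 < Sup (ereal ` Ts)"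
  proof -
    have ta: "ereal 0 < ereal a" using a(1) by simp
    show ?thesis using order_less_le_trans[OF ta a(2)] G by simp
  qed
  then obtain T0 where T0: "T0 \<in> Ts" unfolding less_Sup_iff by blast
  then have T0p: "T0 > 0" unfolding Ts_def by simp
  obtain c where c: "\<forall>t\<in>{0..<T0}. phi (y + t *\<^sub>R e) = phi y + t * c" using aff[OF T0] by blast
  have lim: "((\<lambda>t. (phi (y + t *\<^sub>R e) - phi y) / t) \<longlongrightarrow> c) (at_right 0)"
    by (rule quot_affine[OF T0p c])
  have allT: "\<forall>t\<in>{0..<T}. phi (y + t *\<^sub>R e) = phi y + t * c" if TT: "T \<in> Ts" for T
  proof -
    obtain cT where cT: "\<forall>t\<in>{0..<T}. phi (y + t *\<^sub>R e) = phi y + t * cT" using aff[OF TT] by blast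
    have "T > 0" using TT unfolding Ts_def by simp
    then have "cT = c"
      using tendsto_unique[OF _ quot_affine[OF _ cT] lim] by (simp add: trivial_limit_at_right_real)
    then show ?thesis using cT by simp
  qed
  have below: "phi (y + t *\<^sub>R e) = phi y + t * c" if "t \<in> {0..<a}" for t
  proof -
    have ta: "ereal t < ereal a" using that by simp
    have "ereal t < Sup (ereal ` Ts)" using order_less_le_trans[OF ta a(2)] G by simp
    then obtain T where "T \<in> Ts" "t < T" unfolding less_Sup_iff by auto
    then show ?thesis using allT that by auto
  qed
  have hcont: "continuous_on S (\<lambda>s. phi (y + s *\<^sub>R e))" for S
    by (intro continuous_on_compose2[OF cont line_cont]) auto
  define m where "m s = phi (y + s *\<^sub>R e) - phi y - s * c" for s
  have "m a = 0"
  proof (rule continuous_constant_on_closure[of "{0..<a}" m 0 a])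
    show "continuous_on (closure {0..<a}) m"
      unfolding m_def by (intro continuous_on_diff continuous_on_const hcont continuous_on_mult continuous_on_id)
    show "\<And>s. s \<in> {0..<a} \<Longrightarrow> m s = 0"
      using below by (auto simp: m_def)
    show "a \<in> closure {0..<a}" using a by simp
  qed
  then show ?thesis using lim by (auto simp: m_def algebra_simps)
qed



lemma sqrt_err:
  fixes a S t p b L :: real
  assumes a: "a > 0" and S: "S \<ge> 0" "S^2 = a^2 + 2*t*p + t^2*b^2" and cs: "p^2 \<le> a^2 * b^2"
    and L: "L = a + t * p / a" "L \<ge> a / 2"
  shows "0 \<le> S - L \<and> S - L \<le> t^2 * (a^2*b^2 - p^2) / a^3"
proof -
  have diff: "S^2 - L^2 = t^2 * (a^2*b^2 - p^2) / a^2"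
    using a unfolding S(2) L(1) by (simp add: field_simps power2_eq_square)
  have nn: "t^2 * (a^2*b^2 - p^2) / a^2 \<ge> 0" using cs by simp
  have "L^2 \<le> S^2" using diff nn by simp
  then have SL: "L \<le> S" using S(1) a L(2) by (smt (verit) power2_le_imp_le)
  have pos: "S + L \<ge> a" using SL L(2) by simp
  have "S - L = (S^2 - L^2) / (S + L)"
    using pos a by (simp add: field_simps power2_eq_square)
  also have "\<dots> \<le> (S^2 - L^2) / a"
    using pos a diff nn by (intro divide_left_mono) (auto simp: mult_pos_pos)
  also have "\<dots> = t^2 * (a^2*b^2 - p^2) / a^3"
    using a unfolding diff by (simp add: field_simps power2_eq_square power3_eq_cube)
  finally show ?thesis using SL by simp
qed

lemma norm_err:
  fixes x v :: "'b::real_inner"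
  assumes x: "x \<noteq> 0" and h: "t * inner x v / norm x \<ge> - norm x / 2"
  shows "0 \<le> norm (x + t *\<^sub>R v) - norm x - t * inner x v / norm x \<and>
         norm (x + t *\<^sub>R v) - norm x - t * inner x v / norm x
           \<le> t^2 * ((norm x)^2 * (norm v)^2 - (inner x v)^2) / (norm x)^3"
proof -
  have a: "norm x > 0" using x by simp
  have S2: "(norm (x + t *\<^sub>R v))^2 = (norm x)^2 + 2*t*inner x v + t^2*(norm v)^2"
    by (simp only: power2_norm_eq_inner) (simp add: inner_add_left inner_add_right inner_commute algebra_simps power2_eq_square)
  have cs: "(inner x v)^2 \<le> (norm x)^2 * (norm v)^2"
  proof -
    have "\<bar>inner x v\<bar> \<le> norm x * norm v" by (rule Cauchy_Schwarz_ineq2)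
    then have "\<bar>inner x v\<bar>^2 \<le> (norm x * norm v)^2" by (intro power_mono) auto
    then show ?thesis by (simp add: power_mult_distrib)
  qed
  have L: "norm x + t * inner x v / norm x \<ge> norm x / 2" using h by linarith
  show ?thesis
    using sqrt_err[OF a norm_ge_zero S2 cs refl L] by (simp add: algebra_simps)
qed


lemma ediv_bound:
  assumes "ereal \<alpha> \<le> ediv c m" "m \<ge> 0" "c \<ge> 0"
  shows "\<alpha> * m \<le> c"
proof (cases "m = 0")
  case True then show ?thesis using assms by simp
next
  case False
  then have "\<alpha> \<le> c / m" using assms by (simp add: ediv_def)
  then show ?thesis using False assms(2) by (simp add: field_simps)
qed

lemma gl_idx:
  fixes x v :: "'b::real_inner"
  assumes x: "x \<noteq> 0" and v: "norm v \<le> 1" and al: "\<alpha> > 0" and sg: "\<sigma> > 0"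
   and H1: "ereal \<alpha> \<le> ediv (norm x powr (1+\<sigma>)) (1 - (inner x v / (norm x * norm v))^2)"
   and H2: "ereal \<alpha> \<le> ediv (norm x) (max (- 2 * (inner x v / (norm x * norm v))) 0)"
  shows "0 \<le> norm (x + \<alpha> *\<^sub>R v) - norm x - \<alpha> * inner x v / norm x \<and>
         norm (x + \<alpha> *\<^sub>R v) - norm x - \<alpha> * inner x v / norm x \<le> \<alpha> * norm x powr \<sigma> \<and>
         norm (x + \<alpha> *\<^sub>R v) - norm x - \<alpha> * inner x v / norm x \<le> \<alpha>^2 / norm x"
proof (cases "v = 0")
  case True then show ?thesis using al by simp
next
  case False
  define a where "a = norm x"
  define b where "b = norm v"
  define p where "p = inner x v"
  define th where "th = p / (a * b)"
  have a: "a > 0" using x by (simp add: a_def)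
  have b: "b > 0" "b \<le> 1" using False v by (auto simp: b_def)
  have cs: "\<bar>p\<bar> \<le> a * b" unfolding p_def a_def b_def by (rule Cauchy_Schwarz_ineq2)
  have pth: "p = th * (a * b)" using a b by (simp add: th_def)
  have th1: "\<bar>th\<bar> \<le> 1" using cs a b by (simp add: th_def abs_divide divide_le_eq_1 abs_mult)
  have th2: "th^2 \<le> 1"
  proof -
    have "\<bar>th\<bar>^2 \<le> 1^2" using th1 by (intro power_mono) auto
    then show ?thesis by simp
  qed
  have m2: "\<alpha> * max (- 2 * th) 0 \<le> a"
    using ediv_bound[OF H2[folded a_def b_def p_def, folded th_def]] a by simp
  have h: "\<alpha> * p / a \<ge> - a / 2"
  proof (cases "th < 0")
    case True
    then have "\<alpha> * (- 2 * th) \<le> a" using m2 by simp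
    then have "\<alpha> * th \<ge> - a / 2" by (simp add: algebra_simps)
    then have "\<alpha> * th * b \<ge> - a / 2 * b" using b by (intro mult_right_mono) auto
    moreover have "- a / 2 * b \<ge> - a / 2"
    proof -
      have "a / 2 * b \<le> a / 2 * 1" using a b by (intro mult_left_mono) auto
      then show ?thesis by simp
    qed
    moreover have "\<alpha> * p / a = \<alpha> * th * b" using a by (simp add: pth)
    ultimately show ?thesis by simp
  next
    case False
    then have "p \<ge> 0" using pth a b by simp
    then have "\<alpha> * p / a \<ge> 0" using al a by simp
    then show ?thesis using a by linarith
  qed
  have NE: "0 \<le> norm (x + \<alpha> *\<^sub>R v) - a - \<alpha> * p / a \<and>
      norm (x + \<alpha> *\<^sub>R v) - a - \<alpha> * p / a \<le> \<alpha>^2 * (a^2 * b^2 - p^2) / a^3"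
    using norm_err[OF x, of \<alpha> v] h unfolding a_def b_def p_def by simp
  have m1: "\<alpha> * (1 - th^2) \<le> a powr (1+\<sigma>)"
    using ediv_bound[OF H1[folded a_def b_def p_def, folded th_def]] th2 by simp
  have k1: "a^2 * b^2 - p^2 = a^2 * b^2 * (1 - th^2)"
    by (simp add: pth power_mult_distrib algebra_simps)
  have k2: "\<alpha>^2 * (a^2 * b^2 * (1 - th^2)) / a^3 = \<alpha> * (\<alpha> * (1 - th^2)) * b^2 / a"
    using a by (simp add: power2_eq_square power3_eq_cube)
  have key: "\<alpha>^2 * (a^2 * b^2 - p^2) / a^3 = \<alpha> * (\<alpha> * (1 - th^2)) * b^2 / a"
    using k1 k2 by simp
  have "\<alpha> * (\<alpha> * (1 - th^2)) * b^2 / a \<le> \<alpha> * a powr (1+\<sigma>) * b^2 / a"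
    using m1 al a by (intro divide_right_mono mult_right_mono mult_left_mono) auto
  also have "\<dots> \<le> \<alpha> * a powr (1+\<sigma>) * 1 / a"
  proof -
    have "b^2 \<le> 1" using b by (simp add: power_le_one)
    then show ?thesis using al a by (intro divide_right_mono mult_left_mono) auto
  qed
  also have "\<dots> = \<alpha> * a powr \<sigma>"
    using a by (simp add: powr_add)
  finally have R1: "\<alpha>^2 * (a^2 * b^2 - p^2) / a^3 \<le> \<alpha> * a powr \<sigma>" using key by simp
  have "\<alpha>^2 * (a^2 * b^2 - p^2) / a^3 \<le> \<alpha>^2 * (a^2 * 1) / a^3"
  proof -
    have "b^2 \<le> 1" using b by (simp add: power_le_one)
    then have "a^2 * b^2 \<le> a^2 * 1" by (intro mult_left_mono) auto
    then have "a^2 * b^2 - p^2 \<le> a^2 * 1" using zero_le_power2[of p] by linarith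
    then show ?thesis using a by (intro divide_right_mono mult_left_mono) auto
  qed
  also have "\<dots> = \<alpha>^2 / a" using a by (simp add: power2_eq_square power3_eq_cube)
  finally have R2: "\<alpha>^2 * (a^2 * b^2 - p^2) / a^3 \<le> \<alpha>^2 / a" .
  show ?thesis using NE R1 R2 unfolding a_def p_def by linarith
qed



lemma norm_dir:
  fixes x v :: "'b::real_inner"
  assumes x: "x \<noteq> 0"
  shows "((\<lambda>t. (norm (x + t *\<^sub>R v) - norm x) / t) \<longlongrightarrow> inner x v / norm x) (at_right 0)"
proof -
  define a where "a = norm x"
  define b where "b = norm v"
  define p where "p = inner x v"
  define K where "K = (a^2 * b^2 - p^2) / a^3"
  have a: "a > 0" using x by (simp add: a_def)
  have b: "b \<ge> 0" by (simp add: b_def)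
  have cs: "\<bar>p\<bar> \<le> a * b" unfolding p_def a_def b_def by (rule Cauchy_Schwarz_ineq2)
  have ev: "eventually (\<lambda>t. t \<in> {0<..<a / (2 * b + 2)}) (at_right (0::real))"
    by (rule eventually_at_right_real) (use a b in simp)
  have bnd: "p / a \<le> (norm (x + t *\<^sub>R v) - norm x) / t \<and> (norm (x + t *\<^sub>R v) - norm x) / t \<le> p / a + t * K"
    if t: "t \<in> {0<..<a / (2 * b + 2)}" for t
  proof -
    have t0: "t > 0" using t by simp
    have "t * (2 * b + 2) < a" using t b by (simp add: field_simps)
    then have tb: "t * b \<le> a / 2" using t0 b by (simp add: algebra_simps)
    have "- p \<le> a * b" using cs by linarith
    then have "- (t * p) \<le> t * (a * b)" using t0 by (metis mult_left_mono mult_minus_right less_imp_le)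
    then have "- (t * p) / a \<le> t * b" using a by (simp add: field_simps)
    then have h: "t * p / a \<ge> - a / 2" using tb by (simp add: minus_divide_left[symmetric])
    have NE: "0 \<le> norm (x + t *\<^sub>R v) - a - t * p / a \<and> norm (x + t *\<^sub>R v) - a - t * p / a \<le> t^2 * K"
      using norm_err[OF x, of t v] h unfolding a_def b_def p_def K_def by simp
    have q: "(norm (x + t *\<^sub>R v) - a) / t = p / a + (norm (x + t *\<^sub>R v) - a - t * p / a) / t"
      using t0 a by (simp add: field_simps)
    have "(norm (x + t *\<^sub>R v) - a - t * p / a) / t \<ge> 0" using NE t0 by simp
    moreover have "(norm (x + t *\<^sub>R v) - a - t * p / a) / t \<le> t * K"
      using NE t0 by (simp add: divide_le_eq power2_eq_square algebra_simps)
    ultimately show ?thesis using q unfolding a_def by simp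
  qed
  have l1: "((\<lambda>t::real. p / a) \<longlongrightarrow> p / a) (at_right 0)" by simp
  have "((\<lambda>t::real. p / a + t * K) \<longlongrightarrow> p / a + 0 * K) (at_right 0)"
    by (intro tendsto_intros tendsto_mono[OF at_le tendsto_ident_at])
  then have l2: "((\<lambda>t::real. p / a + t * K) \<longlongrightarrow> p / a) (at_right 0)" by simp
  have "((\<lambda>t. (norm (x + t *\<^sub>R v) - norm x) / t) \<longlongrightarrow> p / a) (at_right 0)"
    by (rule tendsto_sandwich[OF eventually_mono[OF ev] eventually_mono[OF ev] l1 l2]) (use bnd in auto)
  then show ?thesis by (simp add: a_def p_def)
qed


definition gq :: "'b::real_inner \<Rightarrow> 'b \<Rightarrow> real" where
  "gq x v = (if x = 0 then norm v else inner x v / norm x)"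

lemma gq_dir: "((\<lambda>t. (norm (x + t *\<^sub>R v) - norm x) / t) \<longlongrightarrow> gq x v) (at_right 0)"
proof (cases "x = 0")
  case True
  have ev: "eventually (\<lambda>t. t \<in> {0<..<1}) (at_right (0::real))"
    by (rule eventually_at_right_real) simp
  have "eventually (\<lambda>t. norm v = (norm (x + t *\<^sub>R v) - norm x) / t) (at_right (0::real))"
    using ev by eventually_elim (use True in auto)
  moreover have "((\<lambda>_. norm v) \<longlongrightarrow> norm v) (at_right (0::real))" by simp
  ultimately show ?thesis using True tendsto_cong by (fastforce simp: gq_def)
next
  case False
  then show ?thesis using norm_dir[OF False, of v] by (simp add: gq_def)
qed

lemma gl_dir:
  fixes X D :: "real^'n1^'n2"
  shows "((\<lambda>t. (group_lasso (X + t *\<^sub>R D) - group_lasso X) / t) \<longlongrightarrow> (\<Sum>i\<in>UNIV. gq (X $ i) (D $ i))) (at_right 0)"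
proof -
  have eq: "(\<lambda>t. (group_lasso (X + t *\<^sub>R D) - group_lasso X) / t)
      = (\<lambda>t. \<Sum>i\<in>UNIV. (norm (X $ i + t *\<^sub>R D $ i) - norm (X $ i)) / t)"
    by (rule ext) (simp add: group_lasso_def sum_divide_distrib[symmetric] sum_subtractf)
  show ?thesis unfolding eq by (intro tendsto_sum gq_dir)
qed

lemma scalar_bound:
  fixes a \<alpha> \<sigma> \<epsilon> E :: real
  assumes "a > 0" "\<alpha> > 0" "\<sigma> > 0" "\<epsilon> > 0" "\<alpha> \<le> \<epsilon> * \<epsilon> powr (1/\<sigma>)"
    "E \<le> \<alpha> * a powr \<sigma>" "E \<le> \<alpha>^2 / a"
  shows "E \<le> \<epsilon> * \<alpha>"
proof (cases "a \<le> \<epsilon> powr (1/\<sigma>)")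
  case True
  have "a powr \<sigma> \<le> (\<epsilon> powr (1/\<sigma>)) powr \<sigma>"
    using True assms by (intro powr_mono2) auto
  also have "\<dots> = \<epsilon>" using assms by (simp add: powr_powr)
  finally have ae: "a powr \<sigma> \<le> \<epsilon>" .
  have "\<alpha> * a powr \<sigma> \<le> \<alpha> * \<epsilon>" using ae assms(2) by (intro mult_left_mono) auto
  then show ?thesis using assms(6) by (simp add: mult.commute)
next
  case False
  have a0: "\<epsilon> powr (1/\<sigma>) > 0" using assms by simp
  have "\<alpha>^2 / a \<le> \<alpha>^2 / (\<epsilon> powr (1/\<sigma>))"
    using False a0 assms(1) by (intro divide_left_mono) auto
  also have "\<dots> = \<alpha> * (\<alpha> / \<epsilon> powr (1/\<sigma>))" by (simp add: power2_eq_square)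
  also have "\<dots> \<le> \<alpha> * \<epsilon>"
    using assms a0 by (intro mult_left_mono) (auto simp: divide_le_eq)
  finally show ?thesis using assms by (simp add: mult.commute)
qed



lemma gl_idx2:
  fixes X D :: "real^'n1^'n2"
  assumes D: "norm D = 1" and al: "\<alpha> > 0" and sg: "\<sigma> > 0" and ep: "\<epsilon> > 0"
    and small: "\<alpha> \<le> \<epsilon> * \<epsilon> powr (1/\<sigma>)"
    and G: "ereal \<alpha> \<le> group_lasso_safeguard psi \<sigma> X D"
  shows "0 \<le> norm (X $ i + \<alpha> *\<^sub>R D $ i) - norm (X $ i) - \<alpha> * gq (X $ i) (D $ i) \<and>
         norm (X $ i + \<alpha> *\<^sub>R D $ i) - norm (X $ i) - \<alpha> * gq (X $ i) (D $ i) \<le> \<epsilon> * \<alpha>"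
proof (cases "X $ i = 0")
  case True then show ?thesis using al ep by (simp add: gq_def)
next
  case False
  have "norm (D $ i) \<le> norm D" by (rule Finite_Cartesian_Product.norm_nth_le)
  then have v: "norm (D $ i) \<le> 1" using D by simp
  have H1: "ereal \<alpha> \<le> ediv (norm (X $ i) powr (1+\<sigma>)) (1 - (theta X D i)^2)"
   and H2: "ereal \<alpha> \<le> ediv (norm (X $ i)) (max (- 2 * theta X D i) 0)"
    using G False unfolding group_lasso_safeguard_def by (auto simp: le_INF_iff)
  note R = gl_idx[OF False v al sg H1[unfolded theta_def] H2[unfolded theta_def]]
  show ?thesis
    using R scalar_bound[of "norm (X $ i)" \<alpha> \<sigma> \<epsilon>] False al sg ep small by (simp add: gq_def)
qed


lemma gl_err:
  fixes y e :: "nat \<Rightarrow> real^'n1^'n2"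
  assumes sg: "\<sigma> > 0" and al: "\<alpha> \<longlonglongrightarrow> 0"
   and H: "\<forall>l. e l = 0 \<or> (norm (e l) = 1 \<and> 0 < \<alpha> l \<and> ereal (\<alpha> l) \<le> group_lasso_safeguard psi \<sigma> (y l) (e l))"
  shows "(\<lambda>l. if e l = 0 then 0 else group_lasso (y l + \<alpha> l *\<^sub>R e l) - group_lasso (y l)
            - \<alpha> l * (\<Sum>i\<in>UNIV. gq (y l $ i) (e l $ i))) \<in> o(\<alpha>)"
proof (rule landau_o.smallI)
  fix c :: real assume c: "c > 0"
  define N where "N = real (card (UNIV :: 'n2 set))"
  have N: "N > 0" unfolding N_def by simp
  define \<epsilon> where "\<epsilon> = c / N"
  have ep: "\<epsilon> > 0" using c N by (simp add: \<epsilon>_def)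
  have ev: "eventually (\<lambda>l. dist (\<alpha> l) 0 < \<epsilon> * \<epsilon> powr (1/\<sigma>)) sequentially"
    by (rule tendstoD[OF al]) (use ep in simp)
  show "eventually (\<lambda>l. norm (if e l = 0 then 0 else group_lasso (y l + \<alpha> l *\<^sub>R e l) - group_lasso (y l)
            - \<alpha> l * (\<Sum>i\<in>UNIV. gq (y l $ i) (e l $ i))) \<le> c * norm (\<alpha> l)) sequentially"
    using ev
  proof eventually_elim
    case (elim l)
    show ?case
    proof (cases "e l = 0")
      case True then show ?thesis using c by simp
    next
      case False
      then have e1: "norm (e l) = 1" and a0: "0 < \<alpha> l"
        and G: "ereal (\<alpha> l) \<le> group_lasso_safeguard psi \<sigma> (y l) (e l)" using H by auto
      have sm: "\<alpha> l \<le> \<epsilon> * \<epsilon> powr (1/\<sigma>)" using elim a0 by simp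
      define Ei where "Ei i = norm (y l $ i + \<alpha> l *\<^sub>R e l $ i) - norm (y l $ i) - \<alpha> l * gq (y l $ i) (e l $ i)" for i
      have b: "0 \<le> Ei i \<and> Ei i \<le> \<epsilon> * \<alpha> l" for i
        using gl_idx2[OF e1 a0 sg ep sm G] unfolding Ei_def by blast
      have eq: "group_lasso (y l + \<alpha> l *\<^sub>R e l) - group_lasso (y l) - \<alpha> l * (\<Sum>i\<in>UNIV. gq (y l $ i) (e l $ i))
          = (\<Sum>i\<in>UNIV. Ei i)"
        by (simp add: Ei_def group_lasso_def sum_subtractf sum_distrib_left)
      have "(\<Sum>i\<in>UNIV. Ei i) \<le> (\<Sum>i\<in>(UNIV::'n2 set). \<epsilon> * \<alpha> l)"
        using b by (intro sum_mono) auto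
      also have "\<dots> = N * \<epsilon> * \<alpha> l" by (simp add: N_def)
      also have "\<dots> = c * \<alpha> l" using N by (simp add: \<epsilon>_def)
      finally have up: "(\<Sum>i\<in>UNIV. Ei i) \<le> c * \<alpha> l" .
      have lo: "(\<Sum>i\<in>UNIV. Ei i) \<ge> 0" using b by (intro sum_nonneg) auto
      show ?thesis using False eq up lo a0 by simp
    qed
  qed
qed



lemma if_ex:
  "(if P then a = unitv A \<and> b = emin (Gm (unitv A)) (norm A)
    else a = unitv B \<and> b = emin (Gm (unitv B)) (norm B))
   \<Longrightarrow> \<exists>v. a = unitv v \<and> b = emin (Gm (unitv v)) (norm v)"
  by (cases P) auto

lemma TR_facts:
  assumes "TR_run f G phi u d Gam S m \<delta> \<kappa> T \<eta> \<eta>1 \<eta>2 r1 r2 \<Delta>max \<gamma>1 \<gamma>2 eps ell x Dl B s aC c al sb"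
  shows "C1_grad f G" "convex_on UNIV phi" "\<forall>y e. norm e = 1 \<longrightarrow> Gam y e > 0"
    "\<exists>v. sb k = unitv v \<and> al k = emin (Gam (x k) (unitv v)) (norm v)"
proof -
  show "C1_grad f G"
    using assms unfolding TR_run_def Let_def apply (elim conjE) apply assumption done
  show "convex_on UNIV phi"
    using assms unfolding TR_run_def Let_def apply (elim conjE) apply assumption done
  show "\<forall>y e. norm e = 1 \<longrightarrow> Gam y e > 0"
    using assms unfolding TR_run_def Let_def apply (elim conjE) apply assumption done
  show "\<exists>v. sb k = unitv v \<and> al k = emin (Gam (x k) (unitv v)) (norm v)"
    using assms unfolding TR_run_def Let_def
    apply (elim conjE)
    apply (drule spec[of _ k])
    apply (elim conjE)
    apply (rule if_ex)
    apply assumption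
    done
qed

lemma unit_emin:
  assumes pos: "\<forall>y e. norm e = 1 \<longrightarrow> Gam y e > 0"
  shows "unitv v = 0 \<or> (norm (unitv v) = 1 \<and> 0 < emin (Gam y (unitv v)) (norm v)
           \<and> ereal (emin (Gam y (unitv v)) (norm v)) \<le> Gam y (unitv v))"
proof (cases "v = 0")
  case True then show ?thesis by (simp add: unitv_def)
next
  case False
  have n1: "norm (unitv v) = 1" using False by (simp add: unitv_def)
  then have gp: "Gam y (unitv v) > 0" using pos by blast
  have r: "norm v > 0" using False by simp
  show ?thesis
  proof (cases "Gam y (unitv v)")
    case (real g)
    then have "g > 0" using gp by simp
    then show ?thesis using n1 real r by (simp add: emin_def min_def)
  next
    case PInf
    then show ?thesis using n1 r by (simp add: emin_def)
  next
    case MInf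
    then show ?thesis using gp by simp
  qed
qed

lemma sb_good:
  assumes "TR_run f G phi u d Gam S m \<delta> \<kappa> T \<eta> \<eta>1 \<eta>2 r1 r2 \<Delta>max \<gamma>1 \<gamma>2 eps ell x Dl B s aC c al sb"
  shows "sb k = 0 \<or> (norm (sb k) = 1 \<and> 0 < al k \<and> ereal (al k) \<le> Gam (x k) (sb k))"
proof -
  obtain v where v: "sb k = unitv v" "al k = emin (Gam (x k) (unitv v)) (norm v)"
    using TR_facts(4)[OF assms] by blast
  show ?thesis using unit_emin[OF TR_facts(3)[OF assms], of v "x k"] v by simp
qed



lemma part1:
  fixes f phi :: "'a::euclidean_space \<Rightarrow> real"
  assumes TR: "TR_run f G phi u d Gam S m \<delta> \<kappa> T \<eta> \<eta>1 \<eta>2 r1 r2 \<Delta>max \<gamma>1 \<gamma>2 eps ell x Dl B s aC c al sb"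
    and LL: "locally_lipschitz G" and P: "polyhedral phi"
    and GG: "\<forall>y e. norm e = 1 \<longrightarrow> Gam y e \<le> Gmax (\<lambda>z. f z + phi z) y e"
  shows "accuracy_B3 (\<lambda>z. f z + phi z) x al sb"
  unfolding accuracy_B3_def
proof (intro allI impI, elim conjE)
  fix r :: "nat \<Rightarrow> nat"
  assume "strict_mono r" "convergent (\<lambda>l. x (r l))" and al: "(\<lambda>l. al (r l)) \<longlonglongrightarrow> 0"
  then obtain y0 where y: "(\<lambda>l. x (r l)) \<longlonglongrightarrow> y0" unfolding convergent_def by blast
  have C1: "C1_grad f G" and cv: "convex_on UNIV phi" using TR_facts[OF TR] by auto
  have cont: "continuous_on UNIV phi" by (rule convex_on_continuous[OF open_UNIV cv])
  have good: "sb (r l) = 0 \<or> (norm (sb (r l)) = 1 \<and> 0 < al (r l) \<and> ereal (al (r l)) \<le> Gmax (\<lambda>z. f z + phi z) (x (r l)) (sb (r l)))" for l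
    using sb_good[OF TR, of "r l"] GG order_trans by blast
  define q where "q l = (SOME c. phi (x (r l) + al (r l) *\<^sub>R sb (r l)) - phi (x (r l)) = al (r l) * c \<and>
             ((\<lambda>t. (phi (x (r l) + t *\<^sub>R sb (r l)) - phi (x (r l))) / t) \<longlongrightarrow> c) (at_right 0))" for l
  have qp: "phi (x (r l) + al (r l) *\<^sub>R sb (r l)) - phi (x (r l)) = al (r l) * q l \<and>
             ((\<lambda>t. (phi (x (r l) + t *\<^sub>R sb (r l)) - phi (x (r l))) / t) \<longlongrightarrow> q l) (at_right 0)"
    if "sb (r l) \<noteq> 0" for l
  proof -
    have "norm (sb (r l)) = 1 \<and> 0 < al (r l) \<and> ereal (al (r l)) \<le> Gmax (\<lambda>z. f z + phi z) (x (r l)) (sb (r l))"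
      using good[of l] that by blast
    then have "\<exists>c. phi (x (r l) + al (r l) *\<^sub>R sb (r l)) - phi (x (r l)) = al (r l) * c \<and>
             ((\<lambda>t. (phi (x (r l) + t *\<^sub>R sb (r l)) - phi (x (r l))) / t) \<longlongrightarrow> c) (at_right 0)"
      using poly_line[OF C1 P cont] by blast
    then show ?thesis unfolding q_def by (rule someI_ex)
  qed
  have E0: "(\<lambda>l. if sb (r l) = 0 then 0 else phi (x (r l) + al (r l) *\<^sub>R sb (r l)) - phi (x (r l)) - al (r l) * q l)
      \<in> o(\<lambda>l. al (r l))"
  proof (rule landau_o.smallI)
    fix c :: real assume "c > 0"
    then show "eventually (\<lambda>l. norm (if sb (r l) = 0 then 0 else phi (x (r l) + al (r l) *\<^sub>R sb (r l)) - phi (x (r l)) - al (r l) * q l)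
       \<le> c * norm (al (r l))) sequentially"
      by (intro always_eventually allI) (use qp in auto)
  qed
  show "(\<lambda>l. f (x (r l) + al (r l) *\<^sub>R sb (r l)) + phi (x (r l) + al (r l) *\<^sub>R sb (r l)) - (f (x (r l)) + phi (x (r l)))
         - al (r l) * dirderiv (\<lambda>z. f z + phi z) (x (r l)) (sb (r l))) \<in> o(\<lambda>l. al (r l))"
    using generic[OF C1 LL y al, where e="\<lambda>l. sb (r l)" and q=q and phi=phi] good qp E0 by blast
qed


lemma part2:
  fixes f :: "real^'n1^'n2 \<Rightarrow> real"
  assumes TR: "TR_run f G group_lasso u d Gam S m \<delta> \<kappa> T \<eta> \<eta>1 \<eta>2 r1 r2 \<Delta>max \<gamma>1 \<gamma>2 eps ell x Dl B s aC c al sb"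
    and LL: "locally_lipschitz G" and sg: "\<sigma> > 0"
    and GG: "\<forall>X D. norm D = 1 \<longrightarrow> Gam X D = group_lasso_safeguard (\<lambda>z. f z + group_lasso z) \<sigma> X D"
  shows "accuracy_B3 (\<lambda>z. f z + group_lasso z) x al sb"
  unfolding accuracy_B3_def
proof (intro allI impI, elim conjE)
  fix r :: "nat \<Rightarrow> nat"
  assume "strict_mono r" "convergent (\<lambda>l. x (r l))" and al: "(\<lambda>l. al (r l)) \<longlonglongrightarrow> 0"
  then obtain y0 where y: "(\<lambda>l. x (r l)) \<longlonglongrightarrow> y0" unfolding convergent_def by blast
  have C1: "C1_grad f G" using TR_facts[OF TR] by auto
  have good: "sb (r l) = 0 \<or> (norm (sb (r l)) = 1 \<and> 0 < al (r l) \<and>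
      ereal (al (r l)) \<le> group_lasso_safeguard (\<lambda>z. f z + group_lasso z) \<sigma> (x (r l)) (sb (r l)))" for l
    using sb_good[OF TR, of "r l"] GG by auto
  define q where "q l = (\<Sum>i\<in>UNIV. gq (x (r l) $ i) (sb (r l) $ i))" for l
  have qp: "((\<lambda>t. (group_lasso (x (r l) + t *\<^sub>R sb (r l)) - group_lasso (x (r l))) / t) \<longlongrightarrow> q l) (at_right 0)" for l
    unfolding q_def by (rule gl_dir)
  have E0: "(\<lambda>l. if sb (r l) = 0 then 0 else group_lasso (x (r l) + al (r l) *\<^sub>R sb (r l)) - group_lasso (x (r l)) - al (r l) * q l)
      \<in> o(\<lambda>l. al (r l))"
    unfolding q_def by (rule gl_err[OF sg al]) (use good in blast)
  show "(\<lambda>l. f (x (r l) + al (r l) *\<^sub>R sb (r l)) + group_lasso (x (r l) + al (r l) *\<^sub>R sb (r l)) - (f (x (r l)) + group_lasso (x (r l)))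
         - al (r l) * dirderiv (\<lambda>z. f z + group_lasso z) (x (r l)) (sb (r l))) \<in> o(\<lambda>l. al (r l))"
    using generic[OF C1 LL y al, where e="\<lambda>l. sb (r l)" and q=q and phi=group_lasso] good qp E0 by blast
qed


theorem lemma4p4:
  shows
  "(\<forall>(f::'a::euclidean_space \<Rightarrow> real) G phi u d Gam S m \<delta> \<kappa> T \<eta> \<eta>1 \<eta>2 r1 r2 \<Delta>max \<gamma>1 \<gamma>2 eps ell
       x Dl B s aC c al sb.
       TR_run f G phi u d Gam S m \<delta> \<kappa> T \<eta> \<eta>1 \<eta>2 r1 r2 \<Delta>max \<gamma>1 \<gamma>2 eps ell x Dl B s aC c al sb \<and>
       locally_lipschitz G \<and> bounded (range x) \<and>
       polyhedral phi \<and>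
       (\<forall>y e. norm e = 1 \<longrightarrow> Gam y e \<le> Gmax (\<lambda>z. f z + phi z) y e)
     \<longrightarrow> accuracy_B3 (\<lambda>z. f z + phi z) x al sb)
   \<and>
   (\<forall>(f::real^'n1^'n2 \<Rightarrow> real) G u d Gam S m \<delta> \<kappa> T \<eta> \<eta>1 \<eta>2 r1 r2 \<Delta>max \<gamma>1 \<gamma>2 eps ell
       x Dl B s aC c al sb \<sigma>.
       TR_run f G group_lasso u d Gam S m \<delta> \<kappa> T \<eta> \<eta>1 \<eta>2 r1 r2 \<Delta>max \<gamma>1 \<gamma>2 eps ell x Dl B s aC c al sb \<and>
       locally_lipschitz G \<and> bounded (range x) \<and>
       \<sigma> > 0 \<and>
       (\<forall>X D. norm D = 1 \<longrightarrow>
          Gam X D = group_lasso_safeguard (\<lambda>z. f z + group_lasso z) \<sigma> X D)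
     \<longrightarrow> accuracy_B3 (\<lambda>z. f z + group_lasso z) x al sb)"
proof (intro conjI)
  show "\<forall>(f::'a::euclidean_space \<Rightarrow> real) G phi u d Gam S m \<delta> \<kappa> T \<eta> \<eta>1 \<eta>2 r1 r2 \<Delta>max \<gamma>1 \<gamma>2 eps ell
       x Dl B s aC c al sb.
       TR_run f G phi u d Gam S m \<delta> \<kappa> T \<eta> \<eta>1 \<eta>2 r1 r2 \<Delta>max \<gamma>1 \<gamma>2 eps ell x Dl B s aC c al sb \<and>
       locally_lipschitz G \<and> bounded (range x) \<and>
       polyhedral phi \<and>
       (\<forall>y e. norm e = 1 \<longrightarrow> Gam y e \<le> Gmax (\<lambda>z. f z + phi z) y e)
     \<longrightarrow> accuracy_B3 (\<lambda>z. f z + phi z) x al sb"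
    apply (intro allI impI)
    apply (elim conjE)
    apply (erule part1)
      apply assumption+
    done
  show "\<forall>(f::real^'n1^'n2 \<Rightarrow> real) G u d Gam S m \<delta> \<kappa> T \<eta> \<eta>1 \<eta>2 r1 r2 \<Delta>max \<gamma>1 \<gamma>2 eps ell
       x Dl B s aC c al sb \<sigma>.
       TR_run f G group_lasso u d Gam S m \<delta> \<kappa> T \<eta> \<eta>1 \<eta>2 r1 r2 \<Delta>max \<gamma>1 \<gamma>2 eps ell x Dl B s aC c al sb \<and>
       locally_lipschitz G \<and> bounded (range x) \<and>
       \<sigma> > 0 \<and>
       (\<forall>X D. norm D = 1 \<longrightarrow>
          Gam X D = group_lasso_safeguard (\<lambda>z. f z + group_lasso z) \<sigma> X D)
     \<longrightarrow> accuracy_B3 (\<lambda>z. f z + group_lasso z) x al sb"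
    apply (intro allI impI)
    apply (elim conjE)
    apply (erule part2)
      apply assumption+
    done
qed

end
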